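(* Let $n/2 \leq r \leq n$ and let $(\mathcal{S},\mathcal{T})$ be an $r$-maximal cross-intersecting pair in $\binom{[n]}{\leq r}$. For any integer $\ell\ge0$ with $\ell \le r$ and $n-\ell \leq r$, \[|\mathcal{S}(n-\ell)|+ |\mathcal{T}(n-\ell)| + |\mathcal{S}(\ell)|+ |\mathcal{T}(\ell)| = |\mathcal{X}_{n, r}(n-\ell)| + |\mathcal{Y}_{n, r}(n-\ell)| + |\mathcal{X}_{n, r}(\ell)| + |\mathcal{Y}_{n, r}(\ell)|.\]
   Context: $\binom{[n]}{\le r}$ is the set of subsets of $[n]$ of size at most $r$. A pair $(\mathcal{S},\mathcal{T})$ of non-empty families of non-empty subsets is cross-intersecting if $S\cap T\ne\emptyset$ for all $S\in\mathcal{S},T\in\mathcal{T}$; it is $r$-maximal if whenever $(\mathcal{V},\mathcal{W})$ is a cross-intersecting pair in $\binom{[n]}{\le r}$ with $\mathcal{S}\subseteq\mathcal{V}$, $\mathcal{T}\subseteq\mathcal{W}$, then $(\mathcal{V},\mathcal{W})=(\mathcal{S},\mathcal{T})$. For a family $\mathcal{B}$, $\mathcal{B}(\ell)=\{B\in\mathcal{B}:|B|=\ell\}$. $\mathcal{X}_{n,r}=\{[r]\}$ and $\mathcal{Y}_{n,r}=\{Y\in\binom{[n]}{\le r}: Y\cap[r]\ne\emptyset\}$. *)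

theory Defs
  imports Main
begin

definition subsets_le :: "nat \<Rightarrow> nat \<Rightarrow> nat set set" where
  "subsets_le n r = {A. A \<subseteq> {1..n} \<and> card A \<le> r}"

definition cross_intersecting :: "nat set set \<Rightarrow> nat set set \<Rightarrow> bool" where
  "cross_intersecting S T \<longleftrightarrow>
     S \<noteq> {} \<and> T \<noteq> {} \<and> {} \<notin> S \<and> {} \<notin> T \<and>
     (\<forall>A\<in>S. \<forall>B\<in>T. A \<inter> B \<noteq> {})"

definition r_maximal :: "nat \<Rightarrow> nat \<Rightarrow> nat set set \<Rightarrow> nat set set \<Rightarrow> bool" where
  "r_maximal n r S T \<longleftrightarrow>
     S \<subseteq> subsets_le n r \<and> T \<subseteq> subsets_le n r \<and> cross_intersecting S T \<and>
     (\<forall>V W. V \<subseteq> subsets_le n r \<and> W \<subseteq> subsets_le n r \<and> cross_intersecting V W \<and>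
            S \<subseteq> V \<and> T \<subseteq> W \<longrightarrow> V = S \<and> W = T)"

definition layer :: "nat set set \<Rightarrow> nat \<Rightarrow> nat set set" where
  "layer B l = {A \<in> B. card A = l}"

definition X_fam :: "nat \<Rightarrow> nat \<Rightarrow> nat set set" where
  "X_fam n r = {{1..r}}"

definition Y_fam :: "nat \<Rightarrow> nat \<Rightarrow> nat set set" where
  "Y_fam n r = {Y \<in> subsets_le n r. Y \<inter> {1..r} \<noteq> {}}"

end

theory Submission
  imports Defs
begin

lemma rmaxD:
  assumes "r_maximal n r S T"
  shows "S \<subseteq> subsets_le n r" "T \<subseteq> subsets_le n r" "cross_intersecting S T"
  using assms unfolding r_maximal_def by simp_all

lemma ci_sym: "cross_intersecting S T \<longleftrightarrow> cross_intersecting T S"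
  unfolding cross_intersecting_def by (metis Int_commute)

lemma rmax_sym: "r_maximal n r S T \<Longrightarrow> r_maximal n r T S"
proof -
  assume a: "r_maximal n r S T"
  have 1: "S \<subseteq> subsets_le n r" "T \<subseteq> subsets_le n r" "cross_intersecting T S"
    using rmaxD[OF a] ci_sym by auto
  have 2: "V = T \<and> W = S" if "V \<subseteq> subsets_le n r" "W \<subseteq> subsets_le n r" "cross_intersecting V W"
    "T \<subseteq> V" "S \<subseteq> W" for V W
  proof -
    have "cross_intersecting W V" using that(3) ci_sym by blast
    moreover have "\<forall>V W. V \<subseteq> subsets_le n r \<and> W \<subseteq> subsets_le n r \<and> cross_intersecting V W \<and>
            S \<subseteq> V \<and> T \<subseteq> W \<longrightarrow> V = S \<and> W = T" using a unfolding r_maximal_def by (elim conjE)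
    ultimately have "W = S \<and> V = T" using that by blast
    thus ?thesis by blast
  qed
  show ?thesis unfolding r_maximal_def using 1 2 by (intro conjI allI impI) (blast+)
qed

lemma rmax_add:
  assumes "r_maximal n r S T" "A \<in> subsets_le n r" "\<forall>B\<in>T. A \<inter> B \<noteq> {}"
  shows "A \<in> S"
proof -
  have ci: "cross_intersecting S T" and Ss: "S \<subseteq> subsets_le n r" and Ts: "T \<subseteq> subsets_le n r"
    using rmaxD[OF assms(1)] by auto
  have "A \<noteq> {}" using assms(3) ci unfolding cross_intersecting_def by blast
  hence "cross_intersecting (insert A S) T" using ci assms(3) unfolding cross_intersecting_def by auto
  moreover have "insert A S \<subseteq> subsets_le n r" using assms(2) Ss by blast
  moreover have "\<forall>V W. V \<subseteq> subsets_le n r \<and> W \<subseteq> subsets_le n r \<and> cross_intersecting V W \<and>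
            S \<subseteq> V \<and> T \<subseteq> W \<longrightarrow> V = S \<and> W = T" using assms(1) unfolding r_maximal_def by (elim conjE)
  ultimately have "insert A S = S" using Ts by (metis subset_insertI order_refl)
  thus ?thesis by blast
qed

lemma key:
  assumes m: "r_maximal n r S T" and "l \<le> r" "n - l \<le> r" "l \<le> n"
  shows "card (layer T (n - l)) + card (layer S l) = card {A. A \<subseteq> {1..n} \<and> card A = l}"
proof -
  define L where "L = {A. A \<subseteq> {1..n} \<and> card A = l}"
  define c where "c = (\<lambda>A::nat set. {1..n} - A)"
  have m': "r_maximal n r T S" using rmax_sym[OF m] .
  have ci: "cross_intersecting S T" and Ss: "S \<subseteq> subsets_le n r" and Ts: "T \<subseteq> subsets_le n r"
    using rmaxD[OF m] by auto
  have finL: "finite L" unfolding L_def by (rule finite_subset[of _ "Pow {1..n}"]) auto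
  have sub: "layer S l \<subseteq> L" using Ss unfolding layer_def L_def subsets_le_def by auto
  have cardc: "card (c A) = n - l" if "A \<in> L" for A
  proof -
    have "A \<subseteq> {1..n}" "card A = l" using that unfolding L_def by auto
    moreover have "finite A" using calculation(1) finite_subset by blast
    ultimately show ?thesis unfolding c_def by (simp add: card_Diff_subset)
  qed
  have eq: "layer T (n - l) = c ` (L - layer S l)"
  proof
    show "layer T (n - l) \<subseteq> c ` (L - layer S l)"
    proof
      fix B assume B: "B \<in> layer T (n - l)"
      hence BT: "B \<in> T" and cB: "card B = n - l" unfolding layer_def by auto
      have Bs: "B \<subseteq> {1..n}" using BT Ts unfolding subsets_le_def by auto
      define A where "A = {1..n} - B"
      have "finite B" using Bs finite_subset by blast
      hence "card A = l" unfolding A_def using Bs cB assms(4)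
        by (simp add: card_Diff_subset)
      hence AL: "A \<in> L" unfolding L_def A_def by auto
      have "A \<notin> S" using ci BT unfolding cross_intersecting_def A_def by auto
      moreover have "c A = B" unfolding c_def A_def using Bs by auto
      ultimately show "B \<in> c ` (L - layer S l)" using AL unfolding layer_def by auto
    qed
  next
    show "c ` (L - layer S l) \<subseteq> layer T (n - l)"
    proof
      fix B assume "B \<in> c ` (L - layer S l)"
      then obtain A where AL: "A \<in> L" and AS: "A \<notin> S" and B: "B = c A"
        unfolding layer_def L_def by auto
      have As: "A \<in> subsets_le n r" using AL assms(2) unfolding L_def subsets_le_def by auto
      obtain B0 where B0: "B0 \<in> T" "A \<inter> B0 = {}" using rmax_add[OF m As] AS by blast
      have "B0 \<subseteq> {1..n}" using B0 Ts unfolding subsets_le_def by auto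
      hence sB: "B0 \<subseteq> B" using B0 B unfolding c_def by auto
      have cb: "card B = n - l" using cardc[OF AL] B by simp
      have Bsub: "B \<in> subsets_le n r" using B cb assms(3) unfolding c_def subsets_le_def by auto
      have "\<forall>A'\<in>S. B \<inter> A' \<noteq> {}" using ci B0(1) sB unfolding cross_intersecting_def by blast
      hence "B \<in> T" using rmax_add[OF m' Bsub] by blast
      thus "B \<in> layer T (n - l)" using cb unfolding layer_def by auto
    qed
  qed
  have inj: "inj_on c L"
  proof (rule inj_onI)
    fix x y assume "x \<in> L" "y \<in> L" "c x = c y"
    hence "x \<subseteq> {1..n}" "y \<subseteq> {1..n}" "{1..n} - x = {1..n} - y" unfolding L_def c_def by auto
    thus "x = y" by (metis Diff_Diff_Int inf.absorb2)
  qed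
  have "card (layer T (n - l)) = card (L - layer S l)"
    unfolding eq by (rule card_image) (rule inj_on_subset[OF inj], auto)
  also have "\<dots> = card L - card (layer S l)" using sub finL by (simp add: card_Diff_subset rev_finite_subset)
  finally have "card (layer T (n - l)) + card (layer S l) = card L"
    using card_mono[OF finL sub] by simp
  thus ?thesis unfolding L_def .
qed

lemma XY_max:
  assumes "1 \<le> r" "r \<le> n"
  shows "r_maximal n r (X_fam n r) (Y_fam n r)"
proof -
  have Xs: "X_fam n r \<subseteq> subsets_le n r" using assms unfolding X_fam_def subsets_le_def by auto
  have Ys: "Y_fam n r \<subseteq> subsets_le n r" unfolding Y_fam_def by auto
  have ne: "{1..r} \<inter> {1} \<noteq> {}" "{1} \<in> subsets_le n r" using assms unfolding subsets_le_def by auto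
  have ci: "cross_intersecting (X_fam n r) (Y_fam n r)"
    unfolding cross_intersecting_def X_fam_def Y_fam_def using assms ne by auto
  have "V = X_fam n r \<and> W = Y_fam n r"
    if V: "V \<subseteq> subsets_le n r" and W: "W \<subseteq> subsets_le n r" and c: "cross_intersecting V W"
      and sV: "X_fam n r \<subseteq> V" and sW: "Y_fam n r \<subseteq> W" for V W
  proof
    have rV: "{1..r} \<in> V" using sV unfolding X_fam_def by auto
    show "W = Y_fam n r"
    proof
      show "W \<subseteq> Y_fam n r" using W c rV unfolding cross_intersecting_def Y_fam_def
        by (auto simp: inf_commute)
    qed (rule sW)
    show "V = X_fam n r"
    proof
      show "V \<subseteq> X_fam n r"
      proof
        fix A assume A: "A \<in> V"
        have "i \<in> A" if "i \<in> {1..r}" for i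
        proof -
          have "{i} \<in> Y_fam n r" using that assms unfolding Y_fam_def subsets_le_def by auto
          hence "{i} \<in> W" using sW by auto
          thus ?thesis using c A unfolding cross_intersecting_def by auto
        qed
        hence s: "{1..r} \<subseteq> A" by blast
        have "card A \<le> r" "finite A" using A V unfolding subsets_le_def by (auto intro: finite_subset)
        hence "A = {1..r}" using s by (metis card_atLeastAtMost card_seteq diff_Suc_1 finite_atLeastAtMost)
        thus "A \<in> X_fam n r" unfolding X_fam_def by simp
      qed
    qed (rule sV)
  qed
  note mx = this
  show ?thesis unfolding r_maximal_def using Xs Ys ci mx by (intro conjI allI impI) (blast+)
qed

theorem lemma5p2:
  fixes n r l :: nat and S T :: "nat set set"
  assumes "n \<le> 2 * r" and "r \<le> n"
    and "r_maximal n r S T"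
    and "l \<le> r" and "n - l \<le> r"
  shows "card (layer S (n - l)) + card (layer T (n - l)) + card (layer S l) + card (layer T l)
       = card (layer (X_fam n r) (n - l)) + card (layer (Y_fam n r) (n - l))
         + card (layer (X_fam n r) l) + card (layer (Y_fam n r) l)"
proof -
  have r1: "1 \<le> r"
  proof (rule ccontr)
    assume "\<not> 1 \<le> r"
    hence "r = 0" "n = 0" using assms(1) by auto
    hence "S \<subseteq> {{}}" using rmaxD(1)[OF assms(3)] unfolding subsets_le_def by auto
    moreover have "S \<noteq> {}" "{} \<notin> S" using rmaxD(3)[OF assms(3)] unfolding cross_intersecting_def by auto
    ultimately obtain x where "x \<in> S" "x = {}" by auto
    thus False using \<open>{} \<notin> S\<close> by simp
  qed
  have ln: "l \<le> n" using assms by simp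
  have m2: "r_maximal n r (X_fam n r) (Y_fam n r)" using XY_max[OF r1 assms(2)] .
  note k1 = key[OF assms(3) assms(4,5) ln] key[OF rmax_sym[OF assms(3)] assms(4,5) ln]
  note k2 = key[OF m2 assms(4,5) ln] key[OF rmax_sym[OF m2] assms(4,5) ln]
  show ?thesis using k1 k2 by simp
qed

end
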